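(* Let $\mathbb{A}$ be a non-empty set, $C$ a finite semigroup and $\varphi:\mathbb{A}^+\to C$ a semigroup morphism. Then every $x\in\mathbb{A}^\omega$ has a suffix $x'$ which admits a $\varphi$-ultra monochromatic factorization.
   Context: $\mathbb{A}^+$ is the free semigroup of non-empty finite words over $\mathbb{A}$ (with concatenation); $\mathbb{A}^\omega$ is the set of right-infinite words over $\mathbb{A}$. A suffix of $x=x_0x_1\cdots$ is $x_nx_{n+1}\cdots$ for some $n\ge0$. A factorization $x'=V_0V_1V_2\cdots$ with all $V_i\in\mathbb{A}^+$ is $\varphi$-ultra monochromatic if there is $c\in C$ such that for all $k\ge1$, all $0\le n_1<n_2<\cdots<n_k$ and all permutations $\sigma$ of $\{1,\dots,k\}$, $\varphi(V_{n_{\sigma(1)}}V_{n_{\sigma(2)}}\cdots V_{n_{\sigma(k)}})=c$. *)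

theory Defs
  imports Main "HOL-Combinatorics.Permutations"
begin

text \<open>Finite words over the alphabet 'a are lists; A^+ = non-empty lists.
  Infinite words are functions nat \<Rightarrow> 'a.
  phi is a semigroup morphism from A^+ to C.\<close>

definition semigroup_morphism :: "('a list \<Rightarrow> 'c::semigroup_mult) \<Rightarrow> bool" where
  "semigroup_morphism \<phi> \<longleftrightarrow>
     (\<forall>u v. u \<noteq> [] \<longrightarrow> v \<noteq> [] \<longrightarrow> \<phi> (u @ v) = \<phi> u * \<phi> v)"

definition suffix_from :: "(nat \<Rightarrow> 'a) \<Rightarrow> nat \<Rightarrow> (nat \<Rightarrow> 'a)" where
  "suffix_from x n = (\<lambda>i. x (n + i))"

fun fact_start :: "(nat \<Rightarrow> 'a list) \<Rightarrow> nat \<Rightarrow> nat" where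
  "fact_start V 0 = 0"
| "fact_start V (Suc k) = fact_start V k + length (V k)"

definition is_factorization :: "(nat \<Rightarrow> 'a) \<Rightarrow> (nat \<Rightarrow> 'a list) \<Rightarrow> bool" where
  "is_factorization x V \<longleftrightarrow>
     (\<forall>k. V k \<noteq> []) \<and>
     (\<forall>k i. i < length (V k) \<longrightarrow> x (fact_start V k + i) = V k ! i)"

definition ultra_monochromatic :: "('a list \<Rightarrow> 'c::semigroup_mult) \<Rightarrow> (nat \<Rightarrow> 'a list) \<Rightarrow> bool" where
  "ultra_monochromatic \<phi> V \<longleftrightarrow>
     (\<exists>c. \<forall>k::nat. \<forall>n::nat \<Rightarrow> nat. \<forall>\<sigma>::nat \<Rightarrow> nat.
        k \<ge> 1 \<longrightarrow>
        (\<forall>i j. 1 \<le> i \<longrightarrow> i < j \<longrightarrow> j \<le> k \<longrightarrow> n i < n j) \<longrightarrow>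
        \<sigma> permutes {1..k} \<longrightarrow>
        \<phi> (concat (map (\<lambda>i. V (n (\<sigma> i))) [1..<k+1])) = c)"

end

theory Submission
  imports Defs "HOL-Library.Ramsey"
begin

lemma fact_start_eq:
  assumes "strict_mono r"
  shows "fact_start (\<lambda>n. map x [r n..<r (Suc n)]) k = r k - r 0"
proof (induction k)
  case 0 then show ?case by simp
next
  case (Suc k)
  have "r k \<le> r (Suc k)" "r 0 \<le> r k"
    using assms by (simp_all add: strict_mono_less_eq)
  then show ?case using Suc by simp
qed

lemma concat_const:
  assumes mor: "semigroup_morphism \<phi>"
    and ne: "\<And>j. V j \<noteq> []"
    and e: "\<And>j. \<phi> (V j) = e" and idem: "e * e = e"
    and L: "L \<noteq> []"
  shows "\<phi> (concat (map V L)) = e"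
  using L
proof (induction L)
  case Nil then show ?case by simp
next
  case (Cons a L)
  show ?case
  proof (cases "L = []")
    case True then show ?thesis using e by simp
  next
    case False
    then obtain b L' where "L = b # L'" by (cases L) auto
    then have "concat (map V L) \<noteq> []" using ne by simp
    then have "\<phi> (concat (map V (a # L))) = \<phi> (V a) * \<phi> (concat (map V L))"
      using mor ne unfolding semigroup_morphism_def by simp
    also have "\<dots> = e" using Cons.IH False e idem by simp
    finally show ?thesis .
  qed
qed

theorem proposition2p3:
  fixes \<phi> :: "'a list \<Rightarrow> 'c::{finite, semigroup_mult}"
    and x :: "nat \<Rightarrow> 'a"
  assumes "semigroup_morphism \<phi>"
  shows "\<exists>m V. is_factorization (suffix_from x m) V \<and> ultra_monochromatic \<phi> V"
proof -
  obtain idx :: "'c \<Rightarrow> nat" and N where idx: "idx ` UNIV = {i. i < N}" "inj idx"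
    using finite_imp_inj_to_nat_seg[of "UNIV :: 'c set"] by auto
  define seg where "seg = (\<lambda>i j. map x [i..<j])"
  define f where "f = (\<lambda>X::nat set. idx (\<phi> (seg (Min X) (Max X))))"
  have "\<forall>a\<in>(UNIV::nat set). \<forall>b\<in>UNIV. a \<noteq> b \<longrightarrow> f {a, b} < N"
    using idx(1) unfolding f_def by auto
  then obtain Y t where Y: "infinite Y" "\<forall>a\<in>Y. \<forall>b\<in>Y. a\<noteq>b \<longrightarrow> f {a, b} = t"
    using Ramsey2[of "UNIV::nat set" f N] by auto
  obtain r :: "nat \<Rightarrow> nat" where r: "strict_mono r" "\<And>n. r n \<in> Y"
    using infinite_enumerate[OF Y(1)] by auto
  have segc: "\<phi> (seg (r a) (r b)) = \<phi> (seg (r c) (r d))" if "a < b" "c < d" for a b c d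
  proof -
    have "r a < r b" "r c < r d" using r(1) that by (auto simp: strict_mono_def)
    then have "f {r a, r b} = idx (\<phi> (seg (r a) (r b)))" "f {r c, r d} = idx (\<phi> (seg (r c) (r d)))"
      unfolding f_def by (auto simp: min_def max_def)
    moreover have "f {r a, r b} = t" "f {r c, r d} = t"
      using Y(2) r(2) \<open>r a < r b\<close> \<open>r c < r d\<close> by auto
    ultimately show ?thesis using idx(2) by (metis injD)
  qed
  define e where "e = \<phi> (seg (r 0) (r 1))"
  have r012: "r 0 < r 1" "r 1 < r 2" using r(1) by (auto simp: strict_mono_def)
  have "seg (r 0) (r 2) = seg (r 0) (r 1) @ seg (r 1) (r 2)"
    unfolding seg_def using r012 by (metis less_imp_le_nat le_add_diff_inverse map_append upt_add_eq_append)
  moreover have "seg (r 0) (r 1) \<noteq> []" "seg (r 1) (r 2) \<noteq> []"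
    unfolding seg_def using r012 by auto
  ultimately have "\<phi> (seg (r 0) (r 2)) = \<phi> (seg (r 0) (r 1)) * \<phi> (seg (r 1) (r 2))"
    using assms unfolding semigroup_morphism_def by simp
  moreover have "\<phi> (seg (r 0) (r 2)) = e" "\<phi> (seg (r 1) (r 2)) = e"
    unfolding e_def using segc by auto
  ultimately have idem: "e * e = e" unfolding e_def by simp
  define V where "V = (\<lambda>n. seg (r n) (r (Suc n)))"
  have Vne: "V j \<noteq> []" for j
  proof -
    have "r j < r (Suc j)" using r(1) by (simp add: strict_mono_def)
    then show ?thesis unfolding V_def seg_def by simp
  qed
  have Ve: "\<phi> (V j) = e" for j
    unfolding V_def e_def using segc by auto
  have fs: "fact_start V k = r k - r 0" for k
    unfolding V_def seg_def using fact_start_eq[OF r(1)] by blast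
  have "is_factorization (suffix_from x (r 0)) V"
    unfolding is_factorization_def
  proof (intro conjI allI impI)
    fix k show "V k \<noteq> []" by (rule Vne)
  next
    fix k i assume "i < length (V k)"
    moreover have "r 0 \<le> r k" using r(1) by (simp add: strict_mono_less_eq)
    ultimately show "suffix_from x (r 0) (fact_start V k + i) = V k ! i"
      unfolding fs suffix_from_def by (simp add: V_def seg_def)
  qed
  moreover have "ultra_monochromatic \<phi> V"
    unfolding ultra_monochromatic_def
  proof (intro exI allI impI)
    fix k :: nat and n \<sigma> :: "nat \<Rightarrow> nat" assume "1 \<le> k"
    then have "map (\<lambda>i. n (\<sigma> i)) [1..<k+1] \<noteq> []" by simp
    then have "\<phi> (concat (map V (map (\<lambda>i. n (\<sigma> i)) [1..<k+1]))) = e"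
      by (rule concat_const[OF assms Vne Ve idem])
    then show "\<phi> (concat (map (\<lambda>i. V (n (\<sigma> i))) [1..<k+1])) = e"
      by (simp add: comp_def)
  qed
  ultimately show ?thesis by blast
qed

end
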